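(* Suppose $\rho\in\mathcal{P}$. Then there is a positive constant $C_9$ such that $|V_c(x,y)|\le C_9$ for all $(x,y)$ with $x<-3a$ and for all $0<\delta\le\delta_\mu$.
   Context: Fix $a>0$. For $0<\delta<1$ and constants $\beta>0$, $\lambda\in\mathbb{R}$ ($\lambda$ feasible: $\lambda>0$ if $0<\beta<1$, $\lambda\ge-1$ if $\beta=1$, $\lambda\ne0$ if $\beta>1$), put $\mu=\delta+\lambda\delta^{\beta}$, and let $\delta_\mu\in(0,1)$ be a number with $\mu\ge0$ for $0<\delta\le\delta_\mu$. The dielectric constant is $\varepsilon_c=1+\mathrm{i}\mu$ for $x<0$, $\varepsilon_s=-1+\mathrm{i}\delta$ for $0\le x\le a$, $\varepsilon_m=1$ for $x>a$. Let $\mathcal{M}=\{(x,y)\in\mathbb{R}^2:x>a\}$. $\mathcal{P}$ is the set of real-valued $\rho\in L^2(\mathcal{M})\cap L^\infty(\mathcal{M})$ with compact support in $\mathcal{M}$, $0<|\operatorname{supp}\rho|<\infty$ and $\int\!\!\int\rho=0$; $\rho$ is extended by $0$. $d_0,d_1$ are the minimal and maximal $x$-coordinates of $\operatorname{supp}\rho$. Fourier transform in $y$: $\widehat f(x,k)=\int f(x,y)\mathrm{e}^{-\mathrm{i}ky}\mathrm{d}y$; $I_k=\int_{d_0}^{d_1}\widehat\rho(s,k)\mathrm{e}^{-|k|s}\mathrm{d}s$. Let $\chi_c=\varepsilon_s/\varepsilon_c$, $\psi_k^+=\frac{1}{2\chi_c}[(\chi_c+1)\mathrm{e}^{|k|a}+(\chi_c-1)\mathrm{e}^{-|k|a}]$,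 $\psi_k^-=\frac{|k|\varepsilon_s}{2\chi_c}[(\chi_c+1)\mathrm{e}^{|k|a}-(\chi_c-1)\mathrm{e}^{-|k|a}]$, $A_k=I_k/(\mathrm{e}^{-|k|a}(|k|\psi_k^++\psi_k^-))$. The potential $V$ is defined by its $y$-Fourier transform: for $k\ne0$, $\widehat V(x,k)=A_k\mathrm{e}^{|k|x}$ for $x<0$; $\widehat V(x,k)=\frac{A_k}{2\chi_c}[(\chi_c+1)\mathrm{e}^{|k|x}+(\chi_c-1)\mathrm{e}^{-|k|x}]$ for $0\le x\le a$; $\widehat V(x,k)=A_k\psi_k^+\cosh(|k|(x-a))+\frac{A_k\psi_k^-}{|k|}\sinh(|k|(x-a))+\frac1{|k|}\int_a^x\sinh(|k|(x'-x))\widehat\rho(x',k)\mathrm{d}x'$ for $x>a$. It solves $-\nabla\cdot(\varepsilon\nabla V)=\rho$ in $\mathbb{R}^2$ with $V$, $\varepsilon\partial_xV$ continuous across $x=0,a$ and $\partial_xV\to0$ as $|x|\to\infty$. $V_c=V$ restricted to $\{x<0\}$, where $V$ is harmonic; pointwise values refer to its smooth representative. *)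

theory Defs
  imports "HOL-Analysis.Analysis"
begin

text \<open>Layered structure: cladding x<0, slab 0<=x<=a, medium x>a.
  Parameters: a (slab width), beta, lam (lambda), delta.\<close>

definition mu :: "real \<Rightarrow> real \<Rightarrow> real \<Rightarrow> real" where
  "mu beta lam delta = delta + lam * delta powr beta"

definition eps_c :: "real \<Rightarrow> real \<Rightarrow> real \<Rightarrow> complex" where
  "eps_c beta lam delta = 1 + \<i> * complex_of_real (mu beta lam delta)"

definition eps_s :: "real \<Rightarrow> complex" where
  "eps_s delta = -1 + \<i> * complex_of_real delta"

definition chi_c :: "real \<Rightarrow> real \<Rightarrow> real \<Rightarrow> complex" where
  "chi_c beta lam delta = eps_s delta / eps_c beta lam delta"

definition feasible :: "real \<Rightarrow> real \<Rightarrow> bool" where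
  "feasible beta lam \<longleftrightarrow> beta > 0 \<and>
     ((beta < 1 \<longrightarrow> lam > 0) \<and> (beta = 1 \<longrightarrow> lam \<ge> -1) \<and> (beta > 1 \<longrightarrow> lam \<noteq> 0))"

definition supp_rho :: "(real \<times> real \<Rightarrow> real) \<Rightarrow> (real \<times> real) set" where
  "supp_rho rho = closure {p. rho p \<noteq> 0}"

definition admissible :: "real \<Rightarrow> (real \<times> real \<Rightarrow> real) \<Rightarrow> bool" where
  "admissible a rho \<longleftrightarrow>
     rho \<in> borel_measurable lborel \<and>
     integrable lborel (\<lambda>p. (rho p)\<^sup>2) \<and>
     (\<exists>B. AE p in lborel. \<bar>rho p\<bar> \<le> B) \<and>
     compact (supp_rho rho) \<and> supp_rho rho \<subseteq> {p. fst p > a} \<and>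
     0 < emeasure lborel (supp_rho rho) \<and> emeasure lborel (supp_rho rho) < \<infinity> \<and>
     (LINT p|lborel. rho p) = 0"

definition d0 :: "(real \<times> real \<Rightarrow> real) \<Rightarrow> real" where
  "d0 rho = Inf (fst ` supp_rho rho)"

definition d1 :: "(real \<times> real \<Rightarrow> real) \<Rightarrow> real" where
  "d1 rho = Sup (fst ` supp_rho rho)"

definition rho_hat :: "(real \<times> real \<Rightarrow> real) \<Rightarrow> real \<Rightarrow> real \<Rightarrow> complex" where
  "rho_hat rho x k = (LINT y|lborel. complex_of_real (rho (x, y)) * cis (- (k * y)))"

definition I_k :: "(real \<times> real \<Rightarrow> real) \<Rightarrow> real \<Rightarrow> complex" where
  "I_k rho k = (LINT s:{d0 rho..d1 rho}|lborel. rho_hat rho s k * exp (- \<bar>k\<bar> * s))"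

definition psi_plus :: "real \<Rightarrow> real \<Rightarrow> real \<Rightarrow> real \<Rightarrow> real \<Rightarrow> complex" where
  "psi_plus a beta lam delta k =
     (let chi = chi_c beta lam delta in
      1 / (2 * chi) * ((chi + 1) * exp (\<bar>k\<bar> * a) + (chi - 1) * exp (- \<bar>k\<bar> * a)))"

definition psi_minus :: "real \<Rightarrow> real \<Rightarrow> real \<Rightarrow> real \<Rightarrow> real \<Rightarrow> complex" where
  "psi_minus a beta lam delta k =
     (let chi = chi_c beta lam delta in
      complex_of_real \<bar>k\<bar> * eps_s delta / (2 * chi) *
        ((chi + 1) * exp (\<bar>k\<bar> * a) - (chi - 1) * exp (- \<bar>k\<bar> * a)))"

definition A_k :: "real \<Rightarrow> real \<Rightarrow> real \<Rightarrow> real \<Rightarrow> (real \<times> real \<Rightarrow> real) \<Rightarrow> real \<Rightarrow> complex" where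
  "A_k a beta lam delta rho k =
     I_k rho k / (exp (- \<bar>k\<bar> * a) *
       (complex_of_real \<bar>k\<bar> * psi_plus a beta lam delta k + psi_minus a beta lam delta k))"

text \<open>V_c(x,y) for x<0: inverse y-Fourier transform of A_k e^{|k|x}
  (absolutely convergent; this is the smooth representative).\<close>
definition V_c :: "real \<Rightarrow> real \<Rightarrow> real \<Rightarrow> real \<Rightarrow> (real \<times> real \<Rightarrow> real) \<Rightarrow> real \<Rightarrow> real \<Rightarrow> complex" where
  "V_c a beta lam delta rho x y =
     (1 / (2 * pi)) * (LINT k|lborel. A_k a beta lam delta rho k * exp (\<bar>k\<bar> * x) * cis (k * y))"

end

theory Submission
  imports Defs "HOL-Probability.Sinc_Integral"
begin

lemma abs_of_real_c: "\<bar>complex_of_real t\<bar> = complex_of_real \<bar>t\<bar>"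
  by (simp add: abs_complex_def)

lemma den_formula:
  fixes K E :: real and es ec :: complex
  assumes "es \<noteq> 0" "ec \<noteq> 0" "E > 0"
  shows "complex_of_real (1 / E) *
     (complex_of_real K * (1 / (2 * (es/ec)) * ((es/ec + 1) * complex_of_real E + (es/ec - 1) * complex_of_real (1/E)))
      + complex_of_real K * es / (2 * (es/ec)) * ((es/ec + 1) * complex_of_real E - (es/ec - 1) * complex_of_real (1/E)))
   = complex_of_real K / (2 * es) * ((es + ec) * (1 + es) + (es - ec) * (1 - es) / complex_of_real (E^2))"
  using assms by (simp add: field_simps power2_eq_square)

lemma Abound:
  assumes d: "0 < delta" "delta < 1" and m: "0 \<le> mu beta lam delta" and a: "a > 0"
    and k: "k \<noteq> 0" and x: "x \<le> -3 * a"
  shows "cmod (A_k a beta lam delta rho k * exp (\<bar>complex_of_real k\<bar> * complex_of_real x))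
     \<le> 4/3 * cmod (I_k rho k) / \<bar>k\<bar> * exp (- \<bar>k\<bar> * a)"
proof -
  define K where "K = \<bar>k\<bar>"
  define E where "E = exp (K * a)"
  define m where "m = mu beta lam delta"
  define es where "es = eps_s delta"
  define ec where "ec = eps_c beta lam delta"
  have Kp: "K > 0" using k by (simp add: K_def)
  have Ep: "E > 0" by (simp add: E_def)
  have es: "es = Complex (-1) delta" by (simp add: es_def eps_s_def complex_eq_iff)
  have ec: "ec = Complex 1 m" by (simp add: ec_def eps_c_def m_def complex_eq_iff)
  have esn: "es \<noteq> 0" using es by (simp add: complex_eq_iff)
  have ecn: "ec \<noteq> 0" using ec by (simp add: complex_eq_iff)
  have e1: "exp (\<bar>complex_of_real k\<bar> * complex_of_real a) = complex_of_real E"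
    by (simp add: abs_of_real_c E_def K_def flip: exp_of_real)
  have e2: "exp (- \<bar>complex_of_real k\<bar> * complex_of_real a) = complex_of_real (1/E)"
    by (simp add: abs_of_real_c E_def K_def exp_minus divide_inverse flip: exp_of_real)
  have e3: "exp (- \<bar>k\<bar> * a) = 1/E" by (simp add: E_def K_def exp_minus divide_inverse)
  have e4: "exp (K * a) = E" by (simp add: E_def)
  have e5: "exp (- K * a) = 1 / E" by (simp add: E_def exp_minus divide_inverse)
  define B where "B = (es + ec) * (1 + es) + (es - ec) * (1 - es) / complex_of_real (E^2)"
  define den where "den = exp (- \<bar>complex_of_real k\<bar> * complex_of_real a) *
       (complex_of_real \<bar>k\<bar> * psi_plus a beta lam delta k + psi_minus a beta lam delta k)"
  have den: "den = complex_of_real K / (2 * es) * B"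
    unfolding den_def B_def psi_plus_def psi_minus_def Let_def chi_c_def e1 e2 es_def[symmetric] ec_def[symmetric] K_def[symmetric] e4 e5
    by (rule den_formula[OF esn ecn Ep])
  have ReB: "Re B = -(delta*(delta+m)) + (-4 + delta^2 - delta*m)/E^2"
    unfolding B_def es ec by (simp add: Re_divide_of_real power2_eq_square algebra_simps)
  have dm: "delta*(delta+m) \<ge> 0" using d m unfolding m_def by simp
  have q: "-4 + delta^2 - delta*m \<le> -3"
  proof -
    have "delta^2 \<le> 1" using d by (simp add: power_le_one)
    moreover have "delta*m \<ge> 0" using d m unfolding m_def by simp
    ultimately show ?thesis by linarith
  qed
  have E2: "E^2 > 0" using Ep by simp
  have "(-4 + delta^2 - delta*m)/E^2 \<le> -3/E^2" using divide_right_mono[OF q, of "E^2"] E2 by simp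
  hence "Re B \<le> -3/E^2" using ReB dm by linarith
  hence cB: "cmod B \<ge> 3/E^2" using abs_Re_le_cmod[of B] E2 by linarith
  have ces: "cmod es \<le> 2" "cmod es > 0" using cmod_le[of es] d esn unfolding es by auto
  have cden: "cmod den = K / (2 * cmod es) * cmod B"
    unfolding den using Kp by (simp add: norm_mult norm_divide)
  have "K / (2 * cmod es) \<ge> K / 4" using ces Kp by (intro divide_left_mono) auto
  hence cden2: "cmod den \<ge> K/4 * (3/E^2)" unfolding cden
    using cB Kp E2 by (intro mult_mono) auto
  have dpos: "K/4 * (3/E^2) > 0" using Kp E2 by simp
  have ex: "cmod (exp (\<bar>complex_of_real k\<bar> * complex_of_real x)) = exp (K * x)"
    by (simp add: abs_of_real_c K_def flip: exp_of_real of_real_mult)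
  have exb: "exp (K * x) \<le> 1 / E^3"
  proof -
    have "K * x \<le> K * (-3*a)" using mult_left_mono[OF x, of K] Kp by simp
    hence "exp (K*x) \<le> exp (-(3 * (K*a)))" by (simp add: algebra_simps)
    also have "\<dots> = 1 / E^3" by (simp add: E_def exp_minus divide_inverse flip: exp_of_nat_mult)
    finally show ?thesis .
  qed
  have "cmod (A_k a beta lam delta rho k * exp (\<bar>complex_of_real k\<bar> * complex_of_real x))
     = cmod (I_k rho k) / cmod den * exp (K * x)"
    unfolding A_k_def den_def[symmetric] by (simp only: norm_mult norm_divide ex)
  also have "\<dots> \<le> cmod (I_k rho k) / (K/4 * (3/E^2)) * (1 / E^3)"
  proof (rule mult_mono)
    show "cmod (I_k rho k) / cmod den \<le> cmod (I_k rho k) / (K/4 * (3/E^2))"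
    proof (rule divide_left_mono[OF cden2])
      have "cmod den > 0" using cden2 dpos by linarith
      thus "0 < cmod den * (K / 4 * (3 / E\<^sup>2))" using dpos by (rule mult_pos_pos)
    qed simp
    show "0 \<le> cmod (I_k rho k) / (K/4 * (3/E^2))" using dpos by (intro divide_nonneg_pos) auto
  qed (use exb in auto)
  also have "\<dots> = 4/3 * cmod (I_k rho k) / \<bar>k\<bar> * exp (- \<bar>k\<bar> * a)"
    using Kp Ep unfolding e3 by (simp add: K_def field_simps power2_eq_square power3_eq_cube)
  finally show ?thesis .
qed

lemma norm_cis_minus_1: "cmod (cis t - 1) \<le> \<bar>t\<bar>"
proof -
  have "(cmod (cis t - 1))^2 = (cos t - 1)^2 + (sin t)^2"
    by (simp add: cmod_power2 cis.sel)
  also have "\<dots> = 2 - 2 * cos t" using sin_cos_squared_add[of t] by (simp add: power2_eq_square algebra_simps)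
  also have "\<dots> = 4 * (sin (t/2))^2" using cos_double_sin[of "t/2"] by simp
  also have "\<dots> \<le> 4 * (t/2)^2"
  proof -
    have "\<bar>sin (t/2)\<bar>^2 \<le> \<bar>t/2\<bar>^2" by (rule power_mono[OF abs_sin_x_le_abs_x]) simp
    thus ?thesis by (simp only: power2_abs)
  qed
  also have "\<dots> = t^2" by (simp add: power2_eq_square)
  finally have "(cmod (cis t - 1))^2 \<le> \<bar>t\<bar>^2" by simp
  thus ?thesis by (rule power2_le_imp_le) simp
qed

lemma pt_bound:
  assumes "0 \<le> s"
  shows "cmod (cis (- (k * y)) * complex_of_real (exp (- \<bar>k\<bar> * s)) - 1) \<le> \<bar>k\<bar> * (\<bar>s\<bar> + \<bar>y\<bar>)"
proof -
  define e where "e = exp (- \<bar>k\<bar> * s)"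
  have e: "0 < e" "e \<le> 1" using assms by (auto simp: e_def mult_nonneg_nonneg)
  have "1 - e \<le> \<bar>k\<bar> * s" using exp_ge_add_one_self[of "- \<bar>k\<bar> * s"] unfolding e_def by simp
  have "cis (- (k * y)) * complex_of_real e - 1 = cis (- (k * y)) * complex_of_real (e - 1) + (cis (- (k * y)) - 1)"
    by (simp add: algebra_simps)
  also have "cmod \<dots> \<le> cmod (cis (- (k * y)) * complex_of_real (e - 1)) + cmod (cis (- (k * y)) - 1)"
    by (rule norm_triangle_ineq)
  also have "\<dots> \<le> (1 - e) + \<bar>k * y\<bar>"
  proof -
    have "cmod (complex_of_real e - 1) = 1 - e"
      using e by (metis abs_of_nonneg diff_ge_0_iff_ge norm_minus_commute norm_of_real of_real_1 of_real_diff)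
    thus ?thesis using norm_cis_minus_1[of "- (k*y)"] e by (simp add: norm_mult)
  qed
  also have "\<dots> \<le> \<bar>k\<bar> * (\<bar>s\<bar> + \<bar>y\<bar>)"
    using \<open>1 - e \<le> \<bar>k\<bar> * s\<close> assms by (simp add: abs_mult algebra_simps)
  finally show ?thesis unfolding e_def .
qed
lemma Ibound:
  assumes a: "a > 0" and adm: "admissible a rho"
  shows "\<exists>M R. 0 \<le> M \<and> 0 \<le> R \<and> (\<forall>k. cmod (I_k rho k) \<le> M * R * \<bar>k\<bar>)"
proof -
  define S where "S = supp_rho rho"
  have meas[measurable]: "rho \<in> borel_measurable lborel" using adm unfolding admissible_def by blast
  have cS: "compact S" using adm unfolding admissible_def S_def by blast
  have Sa: "S \<subseteq> {p. fst p > a}" using adm unfolding admissible_def S_def by blast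
  have Sfin: "emeasure lborel S < \<infinity>" using adm unfolding admissible_def S_def by blast
  have int0: "(LINT p|lborel. rho p) = 0" using adm unfolding admissible_def S_def by blast
  have bnd: "\<exists>B. AE p in lborel. \<bar>rho p\<bar> \<le> B" using adm unfolding admissible_def S_def by blast
  have zero: "\<And>p. p \<notin> S \<Longrightarrow> rho p = 0" proof -
    fix p assume "p \<notin> S"
    thus "rho p = 0" unfolding S_def supp_rho_def using closure_subset[of "{p. rho p \<noteq> 0}"] by auto
  qed
  have Ssets: "S \<in> sets lborel" using compact_imp_closed[OF cS] by simp
  obtain R0 where R0: "\<forall>p\<in>S. norm p \<le> R0" using compact_imp_bounded[OF cS] bounded_iff by blast
  define R where "R = 2 * max R0 0"
  have R: "\<bar>fst p\<bar> + \<bar>snd p\<bar> \<le> R" if "p \<in> S" for p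
  proof -
    have "\<bar>fst p\<bar> \<le> norm p" using norm_fst_le[of "fst p" "snd p"] by simp
    moreover have "\<bar>snd p\<bar> \<le> norm p" using norm_snd_le[of "snd p" "fst p"] by simp
    ultimately show ?thesis using R0 that unfolding R_def by force
  qed
  obtain B where B: "AE p in lborel. \<bar>rho p\<bar> \<le> B" using bnd by blast
  define B' where "B' = max B 0"
  have int_rho: "integrable lborel rho"
  proof (rule Bochner_Integration.integrable_bound[where f="\<lambda>p. B' * indicator S p"])
    show "integrable lborel (\<lambda>p. B' * indicator S p :: real)"
      using Ssets Sfin by (intro integrable_mult_right) (simp add: integrable_indicator_iff)
    show "AE p in lborel. norm (rho p) \<le> norm (B' * indicator S p :: real)"
      using B by eventually_elim (auto simp: B'_def zero indicator_def)
  qed simp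
  have fstpos: "fst p > 0" if "p \<in> S" for p using Sa that a by force
  define g where "g k p = complex_of_real (rho p) * (cis (- (k * snd p)) * complex_of_real (exp (- \<bar>k\<bar> * fst p)))" for k p
  have c1[measurable]: "(\<lambda>x::real\<times>real. cis (- (k * snd x))) \<in> borel_measurable borel" for k
    by (intro borel_measurable_continuous_onI continuous_intros)
  have c2[measurable]: "(\<lambda>x::real\<times>real. complex_of_real (exp (- \<bar>k\<bar> * fst x))) \<in> borel_measurable borel" for k
    by (intro borel_measurable_continuous_onI continuous_intros)
  have g_meas: "g k \<in> borel_measurable lborel" for k unfolding g_def by measurable
  have g_norm: "norm (g k p) \<le> norm (rho p)" for k p
  proof (cases "p \<in> S")
    case True
    have "exp (- \<bar>k\<bar> * fst p) \<le> 1" using fstpos[OF True] by (simp add: mult_nonneg_nonneg)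
    thus ?thesis by (simp add: g_def norm_mult mult_left_le)
  qed (simp add: g_def zero)
  have g_int: "integrable lborel (g k)" for k
    by (rule Bochner_Integration.integrable_bound[OF int_rho g_meas]) (use g_norm in \<open>auto intro: AE_I2\<close>)
  have fub: "integral\<^sup>L lborel (g k) = (LINT s|lborel. LINT y|lborel. g k (s,y))" for k
    using lborel_pair.integral_fst'[of "g k"] g_int[of k] by (simp add: lborel_prod)
  have inner: "(LINT y|lborel. g k (s,y)) = rho_hat rho s k * complex_of_real (exp (- \<bar>k\<bar> * s))" for k s
    unfolding g_def rho_hat_def by (simp add: mult.assoc[symmetric] integral_mult_left_zero)
  have fstS: "fst ` S \<subseteq> {d0 rho..d1 rho}"
  proof -
    have cf: "compact (fst ` S)" by (rule compact_continuous_image[OF continuous_on_fst[OF continuous_on_id] cS])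
    hence "bdd_below (fst ` S)" "bdd_above (fst ` S)"
      using bounded_imp_bdd_below[OF compact_imp_bounded[OF cf]] bounded_imp_bdd_above[OF compact_imp_bounded[OF cf]] by auto
    thus ?thesis unfolding d0_def d1_def S_def[symmetric]
      by (auto intro!: cInf_lower cSup_upper simp: image_iff) (metis fst_conv)+
  qed
  have rh0: "rho_hat rho s k = 0" if "s \<notin> {d0 rho..d1 rho}" for s k
  proof -
    have "rho (s, y) = 0" for y using fstS that zero by force
    thus ?thesis unfolding rho_hat_def by simp
  qed
  have Ig: "I_k rho k = integral\<^sup>L lborel (g k)" for k
    unfolding fub inner I_k_def set_lebesgue_integral_def
    by (rule Bochner_Integration.integral_cong) (auto simp: indicator_def rh0)
  have rc_int: "integrable lborel (\<lambda>p. complex_of_real (rho p))" using int_rho by simp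
  have rho0: "integral\<^sup>L lborel (\<lambda>p. complex_of_real (rho p)) = 0" using int0 by simp
  have Rnn: "0 \<le> R" unfolding R_def by simp
  define M where "M = (LINT p|lborel. \<bar>rho p\<bar>)"
  have Mnn: "0 \<le> M" unfolding M_def by simp
  have "cmod (I_k rho k) \<le> M * R * \<bar>k\<bar>" for k
  proof -
    have pt: "norm (g k p - complex_of_real (rho p)) \<le> \<bar>rho p\<bar> * (\<bar>k\<bar> * R)" for p
    proof (cases "p \<in> S")
      case True
      have "g k p - complex_of_real (rho p) = complex_of_real (rho p) *
          (cis (- (k * snd p)) * complex_of_real (exp (- \<bar>k\<bar> * fst p)) - 1)"
        unfolding g_def by (simp add: algebra_simps)
      hence "norm (g k p - complex_of_real (rho p)) = \<bar>rho p\<bar> *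
          cmod (cis (- (k * snd p)) * complex_of_real (exp (- \<bar>k\<bar> * fst p)) - 1)"
        by (simp add: norm_mult)
      also have "\<dots> \<le> \<bar>rho p\<bar> * (\<bar>k\<bar> * (\<bar>fst p\<bar> + \<bar>snd p\<bar>))"
        using pt_bound[of "fst p" k "snd p"] fstpos[OF True] by (intro mult_left_mono) auto
      also have "\<dots> \<le> \<bar>rho p\<bar> * (\<bar>k\<bar> * R)"
        using R[OF True] by (intro mult_left_mono) auto
      finally show ?thesis .
    qed (simp add: g_def zero)
    have "I_k rho k = integral\<^sup>L lborel (\<lambda>p. g k p - complex_of_real (rho p))"
      using Ig[of k] rho0 by (simp add: Bochner_Integration.integral_diff[OF g_int rc_int])
    hence "cmod (I_k rho k) \<le> (LINT p|lborel. norm (g k p - complex_of_real (rho p)))"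
      by (simp only: integral_norm_bound)
    also have "\<dots> \<le> (LINT p|lborel. \<bar>rho p\<bar> * (\<bar>k\<bar> * R))"
      using pt g_int rc_int int_rho by (intro integral_mono) auto
    also have "\<dots> = M * R * \<bar>k\<bar>" unfolding M_def by (simp add: integral_mult_left_zero)
    finally show ?thesis .
  qed
  thus ?thesis using Mnn Rnn by blast
qed


lemma int_exp_abs:
  assumes a: "a > 0"
  shows "integrable lborel (\<lambda>k::real. exp (- \<bar>k\<bar> * a))"
proof -
  define f where "f x = indicator {0<..} x *\<^sub>R exp (- (x * a))" for x :: real
  have fi: "integrable lborel f"
    using integrable_I0i_exp_mscale[OF a] unfolding set_integrable_def f_def .
  have gi: "integrable lborel (\<lambda>x. f (0 + (-1) * x))"
    by (rule lborel_integrable_real_affine[OF fi]) simp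
  have hi: "integrable lborel (\<lambda>x. f x + f (0 + (-1) * x))"
    using fi gi by (rule Bochner_Integration.integrable_add)
  show ?thesis
  proof (rule Bochner_Integration.integrable_bound[OF hi])
    show "(\<lambda>k::real. exp (- \<bar>k\<bar> * a)) \<in> borel_measurable lborel"
      by measurable
    have "AE x in lborel. x \<noteq> 0" by (rule AE_lborel_singleton)
    thus "AE x in lborel. norm (exp (- \<bar>x\<bar> * a)) \<le> norm (f x + f (0 + (-1) * x))"
      by eventually_elim (auto simp: f_def indicator_def)
  qed
qed

theorem lemma6p3:
  fixes a beta lam delta_mu :: real and rho :: "real \<times> real \<Rightarrow> real"
  assumes "a > 0"
    and "feasible beta lam"
    and "0 < delta_mu" and "delta_mu < 1"
    and "\<forall>delta. 0 < delta \<and> delta \<le> delta_mu \<longrightarrow> mu beta lam delta \<ge> 0"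
    and "admissible a rho"
  shows "\<exists>C9 > 0. \<forall>delta x y. 0 < delta \<and> delta \<le> delta_mu \<and> x < -3 * a \<longrightarrow>
           cmod (V_c a beta lam delta rho x y) \<le> C9"
proof -
  obtain M R where MR: "0 \<le> M" "0 \<le> R" "\<And>k. cmod (I_k rho k) \<le> M * R * \<bar>k\<bar>"
    using Ibound[OF assms(1) assms(6)] by blast
  define h where "h k = 4/3 * M * R * exp (- \<bar>k\<bar> * a)" for k :: real
  have hi: "integrable lborel h" unfolding h_def
    using int_exp_abs[OF assms(1)] by (intro integrable_mult_right)
  have hnn: "0 \<le> h k" for k unfolding h_def using MR by simp
  define C9 where "C9 = 1 / (2 * pi) * integral\<^sup>L lborel h + 1"
  have Inn: "0 \<le> integral\<^sup>L lborel h" using hnn by (simp add: integral_nonneg)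
  have "0 \<le> 1 / (2 * pi) * integral\<^sup>L lborel h" using Inn by simp
  hence C9p: "C9 > 0" unfolding C9_def by linarith
  have "cmod (V_c a beta lam delta rho x y) \<le> C9"
    if d: "0 < delta" "delta \<le> delta_mu" and x: "x < -3 * a" for delta x y
  proof -
    define F where "F k = A_k a beta lam delta rho k * exp (\<bar>complex_of_real k\<bar> * complex_of_real x) * cis (k * y)" for k
    have m: "0 \<le> mu beta lam delta" using assms(5) d by blast
    have Fb: "norm (F k) \<le> h k" for k
    proof (cases "k = 0")
      case True
      thus ?thesis using hnn[of k] by (simp add: F_def A_k_def psi_minus_def Let_def)
    next
      case False
      have "norm (F k) = cmod (A_k a beta lam delta rho k * exp (\<bar>complex_of_real k\<bar> * complex_of_real x))"
        unfolding F_def by (simp add: norm_mult)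
      also have "\<dots> \<le> 4/3 * cmod (I_k rho k) / \<bar>k\<bar> * exp (- \<bar>k\<bar> * a)"
        using Abound[OF d(1) _ m assms(1) False, of x rho] d assms(4) x by auto
      also have "\<dots> \<le> h k"
      proof -
        have "cmod (I_k rho k) / \<bar>k\<bar> \<le> M * R" using MR(3)[of k] False
          by (simp add: divide_le_eq)
        hence "4/3 * (cmod (I_k rho k) / \<bar>k\<bar>) * exp (- \<bar>k\<bar> * a) \<le> 4/3 * (M * R) * exp (- \<bar>k\<bar> * a)"
          by (intro mult_right_mono mult_left_mono) auto
        thus ?thesis unfolding h_def by (simp add: mult.assoc)
      qed
      finally show ?thesis .
    qed
    have "norm (integral\<^sup>L lborel F) \<le> integral\<^sup>L lborel h"
    proof (cases "integrable lborel (\<lambda>k. norm (F k))")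
      case True
      have "norm (integral\<^sup>L lborel F) \<le> (LINT k|lborel. norm (F k))" by (rule integral_norm_bound)
      also have "\<dots> \<le> integral\<^sup>L lborel h" using True hi Fb by (intro integral_mono) auto
      finally show ?thesis .
    next
      case False
      have "norm (integral\<^sup>L lborel F) \<le> (LINT k|lborel. norm (F k))" by (rule integral_norm_bound)
      also have "\<dots> = 0" using False by (rule not_integrable_integral_eq)
      finally show ?thesis using Inn by linarith
    qed
    hence "1 / (2 * pi) * cmod (integral\<^sup>L lborel F) \<le> 1 / (2 * pi) * integral\<^sup>L lborel h"
      by (intro mult_left_mono) auto
    moreover have "cmod (V_c a beta lam delta rho x y) = 1 / (2 * pi) * cmod (integral\<^sup>L lborel F)"
      unfolding V_c_def F_def[symmetric] norm_mult norm_of_real by (simp add: pi_gt_zero)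
    ultimately have "cmod (V_c a beta lam delta rho x y) \<le> 1 / (2 * pi) * integral\<^sup>L lborel h" by simp
    thus ?thesis unfolding C9_def by linarith
  qed
  thus ?thesis using C9p by blast
qed

end
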